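(* Let $A,B,C$ be finite sets and let $\omega$ be a probability distribution on $A\times B\times C$ with full support, i.e. $\omega^{ijk}>0$ for all $i\in A$, $j\in B$, $k\in C$. Then there exist a unique 2-comb $f\colon B\to A\otimes C$ in $\mathsf{Stoch}$ and a unique stochastic matrix $g\colon A\to B$ such that $$\omega^{ijk}=f_j^{ik}\,g_i^j\qquad\text{for all } i\in A,\ j\in B,\ k\in C,$$ i.e. $\omega$ equals the composite (in the category of nonnegative real matrices) obtained by copying the $A$-output of $f$, feeding one copy into $g$, copying the output of $g$, and feeding one copy of it back into the input $B$ of $f$, with outputs $A$, $B$, $C$.
   Context: $\mathsf{Stoch}$ is the category whose objects are finite sets and whose morphisms $h\colon X\to Y$ are matrices $(h_x^y)$ of nonnegative reals with $\sum_{y} h_x^y=1$ for each $x$ (row index as superscript, column index as subscript); states $I\to Y$ ($I$ a one-point set) are probability distributions, and a morphism $A_1\otimes A_2\to B_1\otimes B_2$ has entries $h_{a_1a_2}^{b_1b_2}$. A morphism $h$ has full support if it has no zero entries. A 2-comb in $\mathsf{Stoch}$ is a stochastic matrix $h\colon A_1\otimes A_2\to B_1\otimes B_2$ such that there is a stochastic matrix $h'\colon A_1\to B_1$ with $\sum_{b_2} h_{a_1a_2}^{b_1b_2}=h'^{\,b_1}_{a_1}$ for all $a_1,a_2,b_1$ (discarding the output $B_2$ equals $h'$ tensored with discarding $A_2$). Here $f\colon B\to A\otimes C$ is viewed as a 2-comb with $A_1=I$ trivial, $A_2=B$, $B_1=A$, $B_2=C$; thus the condition is that $\sum_{k\in C}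 f_j^{ik}$ is independent of $j\in B$. *)

theory Defs
  imports "HOL-Analysis.Analysis"
begin

text \<open>A stochastic matrix h : X \<rightarrow> Y in Stoch between finite sets (given as finite types),
  represented as h x y = h_x^y (input x, output y).\<close>
definition stochastic :: "('x::finite \<Rightarrow> 'y::finite \<Rightarrow> real) \<Rightarrow> bool" where
  "stochastic h \<longleftrightarrow> (\<forall>x y. 0 \<le> h x y) \<and> (\<forall>x. (\<Sum>y\<in>UNIV. h x y) = 1)"

definition distribution :: "('y::finite \<Rightarrow> real) \<Rightarrow> bool" where
  "distribution p \<longleftrightarrow> (\<forall>y. 0 \<le> p y) \<and> (\<Sum>y\<in>UNIV. p y) = 1"

text \<open>A 2-comb h : A1 \<otimes> A2 \<rightarrow> B1 \<otimes> B2: stochastic, and discarding B2 yields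
  h' \<otimes> discard_{A2} for some stochastic h' : A1 \<rightarrow> B1.\<close>
definition comb2 :: "('a1::finite \<times> 'a2::finite \<Rightarrow> 'b1::finite \<times> 'b2::finite \<Rightarrow> real) \<Rightarrow> bool" where
  "comb2 h \<longleftrightarrow> stochastic h \<and>
     (\<exists>h'::'a1 \<Rightarrow> 'b1 \<Rightarrow> real. stochastic h' \<and>
        (\<forall>a1 a2 b1. (\<Sum>b2\<in>UNIV. h (a1, a2) (b1, b2)) = h' a1 b1))"

text \<open>f : B \<rightarrow> A \<otimes> C viewed as a 2-comb with A1 = I (unit), A2 = B, B1 = A, B2 = C.\<close>
definition comb_B_AC :: "('b::finite \<Rightarrow> 'a::finite \<times> 'c::finite \<Rightarrow> real) \<Rightarrow> bool" where
  "comb_B_AC f \<longleftrightarrow> comb2 (\<lambda>(u::unit, j) (i, k). f j (i, k))"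

end

theory Submission
  imports Defs
begin

lemma sum_prod_UNIV:
  fixes h :: "'a::finite \<times> 'b::finite \<Rightarrow> real"
  shows "(\<Sum>x\<in>UNIV. h x) = (\<Sum>i\<in>UNIV. \<Sum>j\<in>UNIV. h (i, j))"
  by (simp add: UNIV_Times_UNIV[symmetric] sum.cartesian_product del: UNIV_Times_UNIV)

theorem theorem1:
  fixes \<omega> :: "'a::finite \<times> 'b::finite \<times> 'c::finite \<Rightarrow> real"
  assumes "distribution \<omega>"
    and "\<forall>i j k. \<omega> (i, j, k) > 0"
  shows "\<exists>!(f, g). comb_B_AC (f :: 'b \<Rightarrow> 'a \<times> 'c \<Rightarrow> real) \<and>
                   stochastic (g :: 'a \<Rightarrow> 'b \<Rightarrow> real) \<and>
                   (\<forall>i j k. \<omega> (i, j, k) = f j (i, k) * g i j)"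
proof -
  define AB where "AB i j = (\<Sum>k\<in>UNIV. \<omega> (i, j, k))" for i j
  define A where "A i = (\<Sum>j\<in>UNIV. AB i j)" for i
  have pos: "\<And>i j k. \<omega> (i, j, k) > 0" using assms(2) by blast
  have ABpos: "AB i j > 0" for i j
    unfolding AB_def by (rule sum_pos) (auto intro: pos)
  have Apos: "A i > 0" for i
    unfolding A_def by (rule sum_pos) (auto intro: ABpos)
  have tot: "(\<Sum>i\<in>UNIV. A i) = 1"
    using assms(1) unfolding distribution_def A_def AB_def
    by (simp add: sum_prod_UNIV)
  define f0 :: "'b \<Rightarrow> 'a \<times> 'c \<Rightarrow> real" where "f0 j ik = \<omega> (fst ik, j, snd ik) * A (fst ik) / AB (fst ik) j" for j ik
  define g0 :: "'a \<Rightarrow> 'b \<Rightarrow> real" where "g0 i j = AB i j / A i" for i j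
  let ?P = "\<lambda>(f :: 'b \<Rightarrow> 'a \<times> 'c \<Rightarrow> real, g :: 'a \<Rightarrow> 'b \<Rightarrow> real). comb_B_AC f \<and> stochastic g \<and>
                   (\<forall>i j k. \<omega> (i, j, k) = f j (i, k) * g i j)"
  have ex: "?P (f0, g0)"
  proof -
    have g: "stochastic g0"
      unfolding stochastic_def
    proof (intro conjI allI)
      fix i j show "0 \<le> g0 i j" using ABpos[of i j] Apos[of i] by (simp add: g0_def)
    next
      fix i
      have "(\<Sum>j\<in>UNIV. g0 i j) = A i / A i"
        by (simp add: g0_def sum_divide_distrib[symmetric] A_def)
      then show "(\<Sum>j\<in>UNIV. g0 i j) = 1" using Apos[of i] by simp
    qed
    have sf: "(\<Sum>k\<in>UNIV. f0 j (i, k)) = A i" for i j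
    proof -
      have "(\<Sum>k\<in>UNIV. f0 j (i, k)) = (\<Sum>k\<in>UNIV. \<omega> (i, j, k)) * A i / AB i j"
        unfolding f0_def by (simp add: sum_distrib_right sum_divide_distrib)
      also have "\<dots> = A i" using ABpos[of i j] by (simp add: AB_def)
      finally show ?thesis .
    qed
    have c: "comb_B_AC f0"
      unfolding comb_B_AC_def comb2_def
    proof (intro conjI exI)
      show "stochastic (\<lambda>(u::unit, j) (i, k). f0 j (i, k))"
        unfolding stochastic_def
      proof (intro conjI allI)
        fix x :: "unit \<times> 'b" and y :: "'a \<times> 'c"
        show "0 \<le> (case x of (u, j) \<Rightarrow> \<lambda>(i, k). f0 j (i, k)) y"
          using pos ABpos Apos
          by (cases x, cases y) (simp add: f0_def less_imp_le)
      next
        fix x :: "unit \<times> 'b"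
        show "(\<Sum>y\<in>UNIV. (case x of (u, j) \<Rightarrow> \<lambda>(i, k). f0 j (i, k)) y) = 1"
          using tot by (cases x) (simp add: sum_prod_UNIV sf)
      qed
      show "stochastic (\<lambda>(u::unit) i. A i)"
        unfolding stochastic_def using tot Apos by (simp add: less_imp_le)
      show "\<forall>a1 a2 b1. (\<Sum>b2\<in>UNIV. (\<lambda>(u::unit, j) (i, k). f0 j (i, k)) (a1, a2) (b1, b2)) = A b1"
        by (simp add: sf)
    qed
    have e: "\<omega> (i, j, k) = f0 j (i, k) * g0 i j" for i j k
      using ABpos[of i j] Apos[of i] by (simp add: f0_def g0_def)
    show ?thesis using g c e by simp
  qed
  have un: "f = f0 \<and> g = g0" if "?P (f, g)" for f g
  proof -
    from that have c: "comb_B_AC f" and g: "stochastic g"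
      and e: "\<And>i j k. \<omega> (i, j, k) = f j (i, k) * g i j" by auto
    from c obtain h' :: "unit \<Rightarrow> 'a \<Rightarrow> real" where
      h': "\<And>a1 a2 b1. (\<Sum>b2\<in>UNIV. f a2 (b1, b2)) = h' a1 b1"
      unfolding comb_B_AC_def comb2_def by auto
    have ab: "AB i j = h' () i * g i j" for i j
    proof -
      have "AB i j = (\<Sum>k\<in>UNIV. f j (i, k)) * g i j"
        unfolding AB_def by (simp add: e sum_distrib_right)
      then show ?thesis using h' by simp
    qed
    have a: "A i = h' () i" for i
      using g unfolding A_def stochastic_def by (simp add: ab sum_distrib_left[symmetric])
    have gg: "g = g0"
    proof (intro ext)
      fix i j show "g i j = g0 i j"
        using ab[of i j] a[of i] Apos[of i] by (simp add: g0_def)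
    qed
    have ff: "f = f0"
    proof (intro ext)
      fix j :: 'b and ik :: "'a \<times> 'c"
      obtain i k where ik: "ik = (i, k)" by (cases ik)
      have "g0 i j > 0" using ABpos Apos by (simp add: g0_def)
      then show "f j ik = f0 j ik"
        using e[of i j k] gg ABpos[of i j] Apos[of i]
        by (simp add: ik f0_def g0_def field_simps)
    qed
    show ?thesis using ff gg by simp
  qed
  show ?thesis
  proof (rule ex1I[of ?P "(f0, g0)"])
    show "?P (f0, g0)" by (rule ex)
    fix y assume "?P y"
    then show "y = (f0, g0)" using un by (cases y) auto
  qed
qed

end
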